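(* Let $r_0\ge r_1\ge0$ be integers and $k\ge 2r_0+1$. Let $T$ be a triangle, $e\in\Delta_1(T)$ an edge with a fixed unit normal $n_e$. Then the space $\mathbb P_k\big(D(e,r_1)\setminus D(\Delta_0(e),r_0)\big)$ is uniquely determined by the values $$\int_e\frac{\partial^\beta u}{\partial n_e^\beta}\lambda_e^{\alpha_e}\,\mathrm ds,\qquad \alpha_e\in\mathbb T^1_{k-2(r_0+1)+\beta},\ \beta=0,1,\dots,r_1.$$
   Context: $T$ has vertices $\texttt v_0,\texttt v_1,\texttt v_2$ and barycentric coordinates $\lambda_0,\lambda_1,\lambda_2$. $\mathbb N$ includes $0$; $\mathbb T^d_j=\{\alpha\in\mathbb N^{d+1}:\sum_i\alpha_i=j\}$ (empty if $j<0$); $\lambda^\alpha=\prod_i\lambda_i^{\alpha_i}$; for $S\subseteq\mathbb T^2_k$, $\mathbb P_k(S)=\mathrm{span}\{\lambda^\alpha:\alpha\in S\}$. A face $f$ (vertex or edge) is identified with its vertex index set, $f^*$ is the complement in $\{0,1,2\}$, $D(f,r)=\{\alpha\in\mathbb T^2_k:\sum_{i\in f^*}\alpha_i\le r\}$, and $D(\Delta_0(e),r_0)$ is the union of $D(\texttt v,r_0)$ over the two vertices $\texttt v$ of $e$. If $e$ has vertices $\texttt v_{e(0)},\texttt v_{e(1)}$, then for $\alpha_e=(a,b)$, $\lambda_e^{\alpha_e}=\lambda_{e(0)}^a\lambda_{e(1)}^b$. "Uniquely determined" means the linear map from the space to the listed values is a bijection. *)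

theory Defs
  imports "HOL-Analysis.Analysis"
begin

type_synonym pt = "real \<times> real"

definition det2 :: "pt \<Rightarrow> pt \<Rightarrow> real" where
  "det2 a b = fst a * snd b - snd a * fst b"

definition nondeg_triangle :: "(nat \<Rightarrow> pt) \<Rightarrow> bool" where
  "nondeg_triangle V \<longleftrightarrow> det2 (V 1 - V 0) (V 2 - V 0) \<noteq> 0"

definition bary :: "(nat \<Rightarrow> pt) \<Rightarrow> nat \<Rightarrow> pt \<Rightarrow> real" where
  "bary V i x = det2 (V ((i+1) mod 3) - x) (V ((i+2) mod 3) - x)
              / det2 (V ((i+1) mod 3) - V i) (V ((i+2) mod 3) - V i)"

definition T2 :: "nat \<Rightarrow> (nat \<Rightarrow> nat) set" where
  "T2 k = {\<alpha>. (\<forall>i>2. \<alpha> i = 0) \<and> \<alpha> 0 + \<alpha> 1 + \<alpha> 2 = k}"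

definition bary_mono :: "(nat \<Rightarrow> pt) \<Rightarrow> (nat \<Rightarrow> nat) \<Rightarrow> pt \<Rightarrow> real" where
  "bary_mono V \<alpha> x = (\<Prod>i<3. bary V i x ^ \<alpha> i)"

definition Pk :: "(nat \<Rightarrow> pt) \<Rightarrow> (nat \<Rightarrow> nat) set \<Rightarrow> (pt \<Rightarrow> real) set" where
  "Pk V S = {u. \<exists>c. u = (\<lambda>x. \<Sum>\<alpha>\<in>S. c \<alpha> * bary_mono V \<alpha> x)}"

text \<open>D(f,r) for a face f given by its vertex index set.\<close>
definition D :: "nat \<Rightarrow> nat set \<Rightarrow> nat \<Rightarrow> (nat \<Rightarrow> nat) set" where
  "D k f r = {\<alpha> \<in> T2 k. (\<Sum>i\<in>{0,1,2} - f. \<alpha> i) \<le> r}"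

definition ndir_deriv :: "nat \<Rightarrow> (pt \<Rightarrow> real) \<Rightarrow> pt \<Rightarrow> pt \<Rightarrow> real" where
  "ndir_deriv \<beta> u n x = (deriv ^^ \<beta>) (\<lambda>t. u (x + t *\<^sub>R n)) 0"

definition edge_moment ::
  "(nat \<Rightarrow> pt) \<Rightarrow> nat \<Rightarrow> nat \<Rightarrow> pt \<Rightarrow> nat \<Rightarrow> nat \<Rightarrow> nat \<Rightarrow> (pt \<Rightarrow> real) \<Rightarrow> real" where
  "edge_moment V i j n \<beta> a b u =
     dist (V i) (V j) * integral {0..1} (\<lambda>s::real.
        (let x = V i + s *\<^sub>R (V j - V i) in
           ndir_deriv \<beta> u n x * bary V i x ^ a * bary V j x ^ b))"

end

theory Submission imports Defs "HOL-Computational_Algebra.Polynomial" "HOL-Library.Function_Algebras" begin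

definition den :: "(nat \<Rightarrow> pt) \<Rightarrow> nat \<Rightarrow> real" where
  "den V l = det2 (V ((l+1) mod 3) - V l) (V ((l+2) mod 3) - V l)"

definition G :: "(nat \<Rightarrow> pt) \<Rightarrow> nat \<Rightarrow> pt \<Rightarrow> real" where
  "G V l w = det2 w (V ((l+1) mod 3) - V ((l+2) mod 3)) / den V l"

lemma det2_num: "det2 (A - (x + t *\<^sub>R w)) (B - (x + t *\<^sub>R w)) = det2 (A - x) (B - x) + t * det2 w (A - B)"
  by (simp add: det2_def algebra_simps)

lemma bary_affine: "bary V l (x + t *\<^sub>R w) = bary V l x + t * G V l w"
  unfolding bary_def G_def den_def det2_num by (simp add: add_divide_distrib)

lemma den_nz: assumes "nondeg_triangle V" "l < 3" shows "den V l \<noteq> 0"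
proof -
  have "l = 0 \<or> l = 1 \<or> l = 2" using assms by auto
  then show ?thesis using assms(1) unfolding nondeg_triangle_def den_def
    by (auto simp: det2_def algebra_simps numeral_2_eq_2)
qed

lemma bary_vertex: assumes "nondeg_triangle V" "l < 3" "l' < 3"
  shows "bary V l (V l') = (if l = l' then 1 else 0)"
proof -
  have d: "den V l \<noteq> 0" using den_nz assms by auto
  have "l = 0 \<or> l = 1 \<or> l = 2" "l' = 0 \<or> l' = 1 \<or> l' = 2" using assms by auto
  then show ?thesis using d unfolding bary_def den_def
    by (auto simp: det2_def numeral_2_eq_2)
qed

lemma det2_orth: assumes "inner n d = 0" "norm n = 1" "d \<noteq> 0" shows "det2 n d \<noteq> 0"
proof
  assume h: "det2 n d = 0"
  obtain n1 n2 d1 d2 where nd: "n = (n1,n2)" "d = (d1,d2)" by (cases n, cases d) auto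
  have e1: "n1*d1 + n2*d2 = 0" using assms(1) nd by (simp add: inner_Pair)
  have e2: "n1*d2 - n2*d1 = 0" using h nd by (simp add: det2_def)
  have e3: "n1*n1 + n2*n2 = 1" using assms(2) nd
    by (simp add: norm_Pair) (metis power2_eq_square real_sqrt_eq_1_iff)
  have "d1 = d1*(n1*n1+n2*n2)" using e3 by simp
  also have "\<dots> = n1*(n1*d1 + n2*d2) - n2*(n1*d2 - n2*d1)" by algebra
  finally have a: "d1 = 0" using e1 e2 by simp
  have "d2 = d2*(n1*n1+n2*n2)" using e3 by simp
  also have "\<dots> = n2*(n1*d1 + n2*d2) + n1*(n1*d2 - n2*d1)" by algebra
  finally have b: "d2 = 0" using e1 e2 by simp
  show False using a b nd assms(3) by (simp add: zero_prod_def)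
qed


definition PP :: "(nat \<Rightarrow> pt) \<Rightarrow> (nat \<Rightarrow> nat) \<Rightarrow> pt \<Rightarrow> pt \<Rightarrow> real poly" where
  "PP V \<alpha> x w = (\<Prod>l<3. [:bary V l x, G V l w:] ^ \<alpha> l)"

lemma deriv_poly_fun: "deriv (poly p) = poly (pderiv p)"
  by (rule ext, rule DERIV_imp_deriv, simp)

lemma higher_deriv_poly: "(deriv ^^ b) (poly p) = poly ((pderiv ^^ b) p)"
  by (induction b) (simp_all add: deriv_poly_fun)

lemma ndir_poly: assumes "(\<lambda>t. u (x + t *\<^sub>R n)) = poly P"
  shows "ndir_deriv b u n x = fact b * coeff P b"
  unfolding ndir_deriv_def assms higher_deriv_poly poly_0_coeff_0 coeff_higher_pderiv
  by (simp add: pochhammer_fact)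

lemma bary_mono_line: "(\<lambda>t. bary_mono V \<alpha> (x + t *\<^sub>R w)) = poly (PP V \<alpha> x w)"
  by (rule ext) (simp add: bary_mono_def PP_def poly_prod bary_affine algebra_simps)

lemma ndir_mono: "ndir_deriv b (bary_mono V \<alpha>) n x = fact b * coeff (PP V \<alpha> x n) b"
  by (rule ndir_poly[OF bary_mono_line])

lemma ndir_sum: "ndir_deriv b (\<lambda>x. \<Sum>\<alpha>\<in>S. c \<alpha> * bary_mono V \<alpha> x) n x
   = fact b * (\<Sum>\<alpha>\<in>S. c \<alpha> * coeff (PP V \<alpha> x n) b)"
proof -
  have "(\<lambda>t. \<Sum>\<alpha>\<in>S. c \<alpha> * bary_mono V \<alpha> (x + t *\<^sub>R n)) = poly (\<Sum>\<alpha>\<in>S. smult (c \<alpha>) (PP V \<alpha> x n))"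
    by (rule ext) (simp add: poly_sum bary_mono_line[symmetric])
  from ndir_poly[OF this] show ?thesis by (simp add: coeff_sum)
qed

lemma bary_edge: assumes "nondeg_triangle V" "l < 3" "i < 3" "j < 3"
  shows "bary V l (V i + s *\<^sub>R (V j - V i)) = (1 - s) * bary V l (V i) + s * bary V l (V j)"
proof -
  have "bary V l (V i + 1 *\<^sub>R (V j - V i)) = bary V l (V i) + 1 * G V l (V j - V i)"
    by (rule bary_affine)
  then have "G V l (V j - V i) = bary V l (V j) - bary V l (V i)" by simp
  then show ?thesis unfolding bary_affine by (simp add: algebra_simps flip: distrib_left)
qed

lemma three: assumes "i < 3" "j < 3" "m < 3" "i \<noteq> j" "i \<noteq> m" "j \<noteq> m"
  shows "{..<3::nat} = {i,j,m}"
  using assms by auto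

lemma PP_edge:
  assumes nd: "nondeg_triangle V" and ijm: "i < 3" "j < 3" "m < 3" "i \<noteq> j" "i \<noteq> m" "j \<noteq> m"
  shows "PP V \<alpha> (V i + s *\<^sub>R (V j - V i)) w =
     [:1 - s, G V i w:] ^ \<alpha> i * [:s, G V j w:] ^ \<alpha> j * monom (G V m w ^ \<alpha> m) (\<alpha> m)"
proof -
  let ?x = "V i + s *\<^sub>R (V j - V i)"
  have bi: "bary V i ?x = 1 - s" and bj: "bary V j ?x = s" and bm: "bary V m ?x = 0"
    using ijm by (simp_all add: bary_edge[OF nd] bary_vertex[OF nd])
  have mon: "[:0, c:] ^ p = monom (c ^ p) p" for c :: real and p
    by (metis monom_0 monom_Suc monom_power mult.commute mult_1 One_nat_def)
  show ?thesis unfolding PP_def three[OF ijm] using ijm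
    by (simp add: bi bj bm mon mult.assoc)
qed

lemma coeff_PP_edge:
  assumes nd: "nondeg_triangle V" and ijm: "i < 3" "j < 3" "m < 3" "i \<noteq> j" "i \<noteq> m" "j \<noteq> m"
  shows "coeff (PP V \<alpha> (V i + s *\<^sub>R (V j - V i)) w) b =
     (if b < \<alpha> m then 0 else if b = \<alpha> m then G V m w ^ b * (1 - s) ^ \<alpha> i * s ^ \<alpha> j
      else coeff (PP V \<alpha> (V i + s *\<^sub>R (V j - V i)) w) b)"
proof -
  have e: "PP V \<alpha> (V i + s *\<^sub>R (V j - V i)) w =
     monom (G V m w ^ \<alpha> m) (\<alpha> m) * ([:1 - s, G V i w:] ^ \<alpha> i * [:s, G V j w:] ^ \<alpha> j)"
    unfolding PP_edge[OF assms] by (simp add: mult.commute)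
  show ?thesis unfolding e coeff_monom_mult
    by (simp add: coeff_mult_0 coeff_0_power)
qed


definition ccoef :: "real set \<Rightarrow> (real \<Rightarrow> real poly) \<Rightarrow> bool" where
  "ccoef A P \<longleftrightarrow> (\<forall>m. continuous_on A (\<lambda>s. coeff (P s) m))"

lemma ccoef_mult: "ccoef A P \<Longrightarrow> ccoef A Q \<Longrightarrow> ccoef A (\<lambda>s. P s * Q s)"
  unfolding ccoef_def coeff_mult by (auto intro!: continuous_intros)

lemma ccoef_one: "ccoef A (\<lambda>s. 1)"
  unfolding ccoef_def by (auto intro!: continuous_intros)

lemma ccoef_power: "ccoef A P \<Longrightarrow> ccoef A (\<lambda>s. P s ^ p)"
  by (induction p) (auto intro: ccoef_mult ccoef_one)

lemma ccoef_prod: "finite L \<Longrightarrow> (\<And>l. l \<in> L \<Longrightarrow> ccoef A (P l)) \<Longrightarrow> ccoef A (\<lambda>s. \<Prod>l\<in>L. P l s)"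
  by (induction L rule: finite_induct) (auto intro: ccoef_mult ccoef_one)

lemma ccoef_lin: "continuous_on A f \<Longrightarrow> ccoef A (\<lambda>s. [:f s, g:])"
  unfolding ccoef_def
proof
  fix m assume "continuous_on A f"
  then show "continuous_on A (\<lambda>s. coeff [:f s, g:] m)"
    by (cases m) (auto simp: coeff_pCons split: nat.split intro!: continuous_intros)
qed

lemma cont_bary_edge: "continuous_on A (\<lambda>s. bary V l (V i + s *\<^sub>R (V j - V i)))"
  unfolding bary_affine by (auto intro!: continuous_intros)

lemma cont_coeff_PP: "continuous_on A (\<lambda>s. coeff (PP V \<alpha> (V i + s *\<^sub>R (V j - V i)) w) b)"
proof -
  have "ccoef A (\<lambda>s. PP V \<alpha> (V i + s *\<^sub>R (V j - V i)) w)"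
    unfolding PP_def by (intro ccoef_prod ccoef_power ccoef_lin cont_bary_edge) auto
  then show ?thesis unfolding ccoef_def by auto
qed

lemma edge_moment_mono: "edge_moment V i j n b a c (bary_mono V \<alpha>) = dist (V i) (V j) *
   integral {0..1} (\<lambda>s. fact b * coeff (PP V \<alpha> (V i + s *\<^sub>R (V j - V i)) n) b *
      bary V i (V i + s *\<^sub>R (V j - V i)) ^ a * bary V j (V i + s *\<^sub>R (V j - V i)) ^ c)"
  unfolding edge_moment_def ndir_mono Let_def ..

lemma edge_moment_sum: "edge_moment V i j n b a c (\<lambda>x. \<Sum>\<alpha>\<in>S. cf \<alpha> * bary_mono V \<alpha> x) = dist (V i) (V j) *
   integral {0..1} (\<lambda>s. fact b * (\<Sum>\<alpha>\<in>S. cf \<alpha> * coeff (PP V \<alpha> (V i + s *\<^sub>R (V j - V i)) n) b) *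
      bary V i (V i + s *\<^sub>R (V j - V i)) ^ a * bary V j (V i + s *\<^sub>R (V j - V i)) ^ c)"
  unfolding edge_moment_def ndir_sum Let_def ..

lemma edge_moment_lin: assumes "finite S"
  shows "edge_moment V i j n b a c (\<lambda>x. \<Sum>\<alpha>\<in>S. cf \<alpha> * bary_mono V \<alpha> x) =
     (\<Sum>\<alpha>\<in>S. cf \<alpha> * edge_moment V i j n b a c (bary_mono V \<alpha>))"
proof -
  let ?x = "\<lambda>s. V i + s *\<^sub>R (V j - V i)"
  let ?F = "\<lambda>\<alpha> s. fact b * coeff (PP V \<alpha> (?x s) n) b * bary V i (?x s) ^ a * bary V j (?x s) ^ c"
  have int: "(\<lambda>s. cf \<alpha> * ?F \<alpha> s) integrable_on {0..1}" for \<alpha>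
    by (intro integrable_continuous_interval continuous_intros cont_coeff_PP cont_bary_edge)
  have "(\<lambda>s. fact b * (\<Sum>\<alpha>\<in>S. cf \<alpha> * coeff (PP V \<alpha> (?x s) n) b) *
      bary V i (?x s) ^ a * bary V j (?x s) ^ c) = (\<lambda>s. \<Sum>\<alpha>\<in>S. cf \<alpha> * ?F \<alpha> s)"
    by (rule ext) (simp add: sum_distrib_left sum_distrib_right mult_ac)
  then have "edge_moment V i j n b a c (\<lambda>x. \<Sum>\<alpha>\<in>S. cf \<alpha> * bary_mono V \<alpha> x)
     = dist (V i) (V j) * (\<Sum>\<alpha>\<in>S. integral {0..1} (\<lambda>s. cf \<alpha> * ?F \<alpha> s))"
    unfolding edge_moment_sum using integral_sum[OF assms int] by simp
  also have "\<dots> = (\<Sum>\<alpha>\<in>S. cf \<alpha> * edge_moment V i j n b a c (bary_mono V \<alpha>))"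
    unfolding edge_moment_mono integral_mult_right sum_distrib_left by (simp add: mult_ac)
  finally show ?thesis .
qed


lemma integral_zero_imp:
  fixes f :: "real \<Rightarrow> real"
  assumes "continuous_on {0..1} f" "\<And>s. s \<in> {0..1} \<Longrightarrow> 0 \<le> f s" "integral {0..1} f = 0"
    and "s \<in> {0..1}"
  shows "f s = 0"
proof -
  have "(f has_integral 0) {0..1}"
    using integrable_integral[OF integrable_continuous_interval[OF assms(1)]] assms(3) by simp
  then show ?thesis
    using has_integral_0_cbox_imp_0[of 0 1 f s] assms by auto
qed

lemma bern:
  fixes C :: "nat \<Rightarrow> real"
  assumes "finite A" "A \<subseteq> {..d}" "\<And>s. 0 < s \<Longrightarrow> s < 1 \<Longrightarrow> (\<Sum>e\<in>A. C e * (1-s)^(d-e) * s^e) = 0"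
    and "e0 \<in> A"
  shows "C e0 = 0"
proof (rule ccontr)
  assume nz: "C e0 \<noteq> 0"
  let ?C = "\<lambda>e. if e \<in> A then C e else 0"
  have z: "(\<Sum>e\<le>d. ?C e * t^e) = 0" if t: "0 < t" for t :: real
  proof -
    let ?s = "t / (1 + t)"
    have s: "0 < ?s" "?s < 1" using t by auto
    have ones: "1 - ?s = 1 / (1 + t)" using t by (simp add: field_simps)
    have trm: "(1 - ?s)^(d-e) * ?s^e = t^e / (1+t)^d" if "e \<in> A" for e
    proof -
      have "e \<le> d" using that assms(2) by auto
      then have "(1+t)^d = (1+t)^(d-e) * (1+t)^e" by (simp flip: power_add)
      then show ?thesis unfolding ones using t by (simp add: power_divide)
    qed
    have "0 = (\<Sum>e\<in>A. C e * (1-?s)^(d-e) * ?s^e)" using assms(3)[OF s] by simp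
    also have "\<dots> = (\<Sum>e\<in>A. C e * t^e) / (1+t)^d"
      by (simp add: sum_divide_distrib mult.assoc trm)
    finally have "(\<Sum>e\<in>A. C e * t^e) = 0" using t by simp
    moreover have "(\<Sum>e\<le>d. ?C e * t^e) = (\<Sum>e\<in>A. C e * t^e)"
    proof -
      have "(\<Sum>e\<le>d. ?C e * t^e) = (\<Sum>e\<in>A. ?C e * t^e)"
        by (rule sum.mono_neutral_right) (use assms(2) in auto)
      then show ?thesis by simp
    qed
    ultimately show ?thesis by simp
  qed
  have "finite {t::real. (\<Sum>e\<le>d. ?C e * t^e) = 0}"
    by (rule polyfun_roots_finite[of ?C e0]) (use nz assms(2,4) in auto)
  moreover have "{0<..} \<subseteq> {t::real. (\<Sum>e\<le>d. ?C e * t^e) = 0}" using z by auto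
  ultimately have "finite {0::real<..}" by (rule finite_subset[rotated])
  then have "finite {0::real<..<1}" by (rule finite_subset[rotated]) auto
  then show False using infinite_Ioo_iff[of "0::real" 1] by simp
qed


lemma sum_fun_app: "sum f A x = (\<Sum>y\<in>A. f y x)"
  by (induction A rule: infinite_finite_induct) auto

lemma lin_alg:
  fixes v :: "'a \<Rightarrow> 'b \<Rightarrow> real" and w :: "'b \<Rightarrow> real"
  assumes fS: "finite S" and fB: "finite B" and card: "card S = card B"
    and vB: "\<And>\<alpha> x. \<alpha> \<in> S \<Longrightarrow> x \<notin> B \<Longrightarrow> v \<alpha> x = 0"
    and ind: "\<And>c. (\<And>x. x \<in> B \<Longrightarrow> (\<Sum>\<alpha>\<in>S. c \<alpha> * v \<alpha> x) = 0) \<Longrightarrow> \<forall>\<alpha>\<in>S. c \<alpha> = 0"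
    and wB: "\<And>x. x \<notin> B \<Longrightarrow> w x = 0"
  shows "\<exists>c. \<forall>x\<in>B. (\<Sum>\<alpha>\<in>S. c \<alpha> * v \<alpha> x) = w x"
proof -
  interpret vs: vector_space "\<lambda>(r::real) (f::'b\<Rightarrow>real) x. r * f x"
    by unfold_locales (auto simp: fun_eq_iff algebra_simps)
  define E where "E = (\<lambda>b x. if x = b then 1 else (0::real)) ` B"
  have fE: "finite E" using fB E_def by simp
  have injd: "inj_on (\<lambda>b x. if x = b then 1 else (0::real)) B"
    by (rule inj_onI) (metis (mono_tags) zero_neq_one)
  have cE: "card E = card B" unfolding E_def using card_image[OF injd] .
  have inspan: "f \<in> vs.span E" if f: "\<And>x. x \<notin> B \<Longrightarrow> f x = 0" for f
  proof -
    have "f = (\<Sum>b\<in>B. (\<lambda>x. f b * (if x = b then 1 else 0)))"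
    proof
      fix x show "f x = (\<Sum>b\<in>B. (\<lambda>x. f b * (if x = b then 1 else 0))) x"
      proof -
        have "(\<Sum>y\<in>B. f y * (if x = y then 1 else 0)) = (\<Sum>y\<in>B. if x = y then f y else 0)"
          by (rule sum.cong) auto
        then show ?thesis unfolding sum_fun_app using f fB by (cases "x \<in> B") auto
      qed
    qed
    also have "\<dots> \<in> vs.span E"
      by (intro vs.span_sum vs.span_scale vs.span_base) (auto simp: E_def)
    finally show ?thesis .
  qed
  have injv: "inj_on v S"
  proof (rule inj_onI, rule ccontr)
    fix \<alpha> \<alpha>' assume a: "\<alpha> \<in> S" "\<alpha>' \<in> S" "v \<alpha> = v \<alpha>'" "\<alpha> \<noteq> \<alpha>'"
    let ?c = "\<lambda>\<gamma>. if \<gamma> = \<alpha> then 1 else if \<gamma> = \<alpha>' then -1 else (0::real)"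
    have "(\<Sum>\<gamma>\<in>S. ?c \<gamma> * v \<gamma> x) = 0" for x
    proof -
      have "(\<Sum>\<gamma>\<in>S. ?c \<gamma> * v \<gamma> x) = (\<Sum>\<gamma>\<in>{\<alpha>,\<alpha>'}. ?c \<gamma> * v \<gamma> x)"
        by (rule sum.mono_neutral_right) (use fS a in auto)
      then show ?thesis using a by simp
    qed
    then have "\<forall>\<gamma>\<in>S. ?c \<gamma> = 0" by (intro ind)
    then show False using a by auto
  qed
  have indep: "vs.independent (v ` S)"
  proof (rule vs.independent_if_scalars_zero)
    show "finite (v ` S)" using fS by simp
    fix f y assume h: "(\<Sum>x\<in>v ` S. (\<lambda>z. f x * x z)) = 0" and y: "y \<in> v ` S"
    have h2: "(\<Sum>\<alpha>\<in>S. (\<lambda>z. f (v \<alpha>) * v \<alpha> z)) = 0"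
      using h unfolding sum.reindex[OF injv] comp_def .
    have "(\<Sum>\<alpha>\<in>S. f (v \<alpha>) * v \<alpha> x) = 0" for x
      using fun_cong[OF h2, of x] unfolding sum_fun_app by simp
    then have "\<forall>\<alpha>\<in>S. f (v \<alpha>) = 0" by (intro ind)
    then show "f y = 0" using y by auto
  qed
  have "w \<in> vs.span (v ` S)"
  proof (rule ccontr)
    assume nw: "w \<notin> vs.span (v ` S)"
    have i2: "vs.independent (insert w (v ` S))" by (rule vs.independent_insertI[OF nw indep])
    have sub: "insert w (v ` S) \<subseteq> vs.span E" using inspan wB vB by auto
    have "card (insert w (v ` S)) \<le> card E"
      using vs.independent_span_bound[OF fE i2 sub] by simp
    moreover have "w \<notin> v ` S" using nw vs.span_base[of w "v ` S"] by blast
    then have "card (insert w (v ` S)) = Suc (card (v ` S))"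
      using fS by simp
    then have "card (insert w (v ` S)) = Suc (card S)"
      using card_image[OF injv] by simp
    ultimately show False using cE card by simp
  qed
  then obtain u where u: "(\<Sum>y\<in>v ` S. (\<lambda>z. u y * y z)) = w"
    using vs.span_finite[of "v ` S"] fS by auto
  have "(\<Sum>\<alpha>\<in>S. (\<lambda>z. u (v \<alpha>) * v \<alpha> z)) = w"
    using u unfolding sum.reindex[OF injv] comp_def .
  then have "\<forall>x\<in>B. (\<Sum>\<alpha>\<in>S. u (v \<alpha>) * v \<alpha> x) = w x"
    using fun_cong[of _ w] unfolding sum_fun_app by metis
  then show ?thesis by (intro exI[of _ "\<lambda>\<alpha>. u (v \<alpha>)"])
qed


lemma bern2:
  fixes c :: "'a \<Rightarrow> real"
  assumes "finite S" "inj_on \<psi> S" "\<And>\<alpha>. \<alpha> \<in> S \<Longrightarrow> \<psi> \<alpha> \<le> d"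
    "\<And>s. 0 < s \<Longrightarrow> s < 1 \<Longrightarrow> (\<Sum>\<alpha>\<in>S. c \<alpha> * (1-s)^(d - \<psi> \<alpha>) * s^(\<psi> \<alpha>)) = 0"
    and "\<alpha>0 \<in> S"
  shows "c \<alpha>0 = 0"
proof -
  let ?C = "\<lambda>e. c (inv_into S \<psi> e)"
  have "?C (\<psi> \<alpha>0) = 0"
  proof (rule bern[of "\<psi> ` S" d])
    show "finite (\<psi> ` S)" using assms(1) by simp
    show "\<psi> ` S \<subseteq> {..d}" using assms(3) by auto
    show "\<psi> \<alpha>0 \<in> \<psi> ` S" using assms(5) by simp
    fix s :: real assume s: "0 < s" "s < 1"
    have "(\<Sum>e\<in>\<psi> ` S. ?C e * (1-s)^(d-e) * s^e) = (\<Sum>\<alpha>\<in>S. ?C (\<psi> \<alpha>) * (1-s)^(d - \<psi> \<alpha>) * s^(\<psi> \<alpha>))"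
      by (simp add: sum.reindex[OF assms(2)])
    also have "\<dots> = (\<Sum>\<alpha>\<in>S. c \<alpha> * (1-s)^(d - \<psi> \<alpha>) * s^(\<psi> \<alpha>))"
      by (rule sum.cong) (use assms(2) in auto)
    also have "\<dots> = 0" using assms(4)[OF s] .
    finally show "(\<Sum>e\<in>\<psi> ` S. ?C e * (1-s)^(d-e) * s^e) = 0" .
  qed
  then show ?thesis using assms(2,5) by simp
qed

lemma ijm_cases: assumes "i \<in> {0,1,2}" "j \<in> {0,1,2}" "i \<noteq> j"
  shows "(i=0 \<and> j=1 \<and> 3-i-j=2) \<or> (i=0 \<and> j=2 \<and> 3-i-j=1) \<or> (i=1 \<and> j=0 \<and> 3-i-j=2) \<or>
         (i=1 \<and> j=2 \<and> 3-i-j=0) \<or> (i=2 \<and> j=0 \<and> 3-i-j=1) \<or> (i=2 \<and> j=1 \<and> 3-i-j=(0::nat))"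
  using assms by auto

lemma S_char: assumes "i \<in> {0,1,2}" "j \<in> {0,1,2}" "i \<noteq> j" "m = 3 - i - j"
  shows "\<alpha> \<in> D k {i,j} r1 - (D k {i} r0 \<union> D k {j} r0) \<longleftrightarrow>
    (\<forall>l>2. \<alpha> l = 0) \<and> \<alpha> i + \<alpha> j + \<alpha> m = k \<and> \<alpha> m \<le> r1 \<and> r0 < \<alpha> j + \<alpha> m \<and> r0 < \<alpha> i + \<alpha> m"
  using ijm_cases[OF assms(1-3)] assms(4)
  by (elim disjE) (auto simp: D_def T2_def insert_Diff_if)


definition SS :: "nat \<Rightarrow> nat \<Rightarrow> nat \<Rightarrow> nat \<Rightarrow> nat \<Rightarrow> (nat \<Rightarrow> nat) set" where
  "SS k i j r0 r1 = D k {i,j} r1 - (D k {i} r0 \<union> D k {j} r0)"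

definition BB :: "nat \<Rightarrow> nat \<Rightarrow> nat \<Rightarrow> (nat \<times> nat \<times> nat) set" where
  "BB k r0 r1 = {(\<beta>, a, b). \<beta> \<le> r1 \<and> a + b + 2 * (r0 + 1) = k + \<beta>}"

lemma finite_BB: "finite (BB k r0 r1)"
proof -
  have "BB k r0 r1 \<subseteq> {..r1} \<times> {..k+r1} \<times> {..k+r1}" unfolding BB_def by auto
  then show ?thesis by (rule finite_subset) auto
qed

lemma bij_BB_SS: assumes ij: "i \<in> {0,1,2}" "j \<in> {0,1,2}" "i \<noteq> j" and m: "m = 3 - i - j"
  and r: "r1 \<le> r0"
  shows "finite (SS k i j r0 r1) \<and> card (SS k i j r0 r1) = card (BB k r0 r1)"
proof -
  have mi: "m \<noteq> i" "m \<noteq> j" "m < 3" "i < 3" "j < 3" using ijm_cases[OF ij] m by auto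
  have out: "l \<notin> {i,j,m} \<Longrightarrow> 2 < l" for l using ijm_cases[OF ij] m by auto
  define f where "f = (\<lambda>(\<beta>::nat, a::nat, b::nat). (\<lambda>l. if l = m then \<beta> else if l = i then a + (r0+1-\<beta>)
        else if l = j then b + (r0+1-\<beta>) else 0))"
  define f' where "f' = (\<lambda>\<alpha>::nat\<Rightarrow>nat. (\<alpha> m, \<alpha> i - (r0+1-\<alpha> m), \<alpha> j - (r0+1-\<alpha> m)))"
  note SC = S_char[OF ij m]
  have "bij_betw f (BB k r0 r1) (SS k i j r0 r1)"
  proof (rule bij_betw_byWitness[where f'=f'])
    show "\<forall>x\<in>BB k r0 r1. f' (f x) = x"
      using mi ij by (auto simp: f_def f'_def BB_def)
    show "\<forall>\<alpha>\<in>SS k i j r0 r1. f (f' \<alpha>) = \<alpha>"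
    proof
      fix \<alpha> assume "\<alpha> \<in> SS k i j r0 r1"
      then have h: "(\<forall>l>2. \<alpha> l = 0) \<and> \<alpha> i + \<alpha> j + \<alpha> m = k \<and> \<alpha> m \<le> r1 \<and> r0 < \<alpha> j + \<alpha> m \<and> r0 < \<alpha> i + \<alpha> m"
        using SC SS_def by auto
      show "f (f' \<alpha>) = \<alpha>"
      proof
        fix l
        show "f (f' \<alpha>) l = \<alpha> l"
          using h out[of l] mi unfolding f_def f'_def by auto
      qed
    qed
    show "f ` BB k r0 r1 \<subseteq> SS k i j r0 r1"
    proof
      fix \<alpha> assume "\<alpha> \<in> f ` BB k r0 r1"
      then obtain \<beta> a b where x: "(\<beta>,a,b) \<in> BB k r0 r1" "\<alpha> = f (\<beta>,a,b)" by auto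
      have "(\<forall>l>2. \<alpha> l = 0)" using x(2) mi unfolding f_def by auto
      moreover have "\<alpha> m = \<beta>" "\<alpha> i = a + (r0+1-\<beta>)" "\<alpha> j = b + (r0+1-\<beta>)"
        using x(2) mi ij(3) unfolding f_def by auto
      ultimately show "\<alpha> \<in> SS k i j r0 r1" unfolding SS_def SC using x(1) r unfolding BB_def by auto
    qed
    show "f' ` SS k i j r0 r1 \<subseteq> BB k r0 r1"
    proof
      fix x assume "x \<in> f' ` SS k i j r0 r1"
      then obtain \<alpha> where x: "\<alpha> \<in> SS k i j r0 r1" "x = f' \<alpha>" by auto
      then have h: "(\<forall>l>2. \<alpha> l = 0) \<and> \<alpha> i + \<alpha> j + \<alpha> m = k \<and> \<alpha> m \<le> r1 \<and> r0 < \<alpha> j + \<alpha> m \<and> r0 < \<alpha> i + \<alpha> m"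
        using SC SS_def by auto
      then show "x \<in> BB k r0 r1" using x(2) r unfolding f'_def BB_def by auto
    qed
  qed
  then show ?thesis using finite_BB bij_betw_finite bij_betw_same_card by metis
qed

lemma V_distinct: assumes "nondeg_triangle V" "l < 3" "l' < 3" "l \<noteq> l'" shows "V l \<noteq> V l'"
  using bary_vertex[OF assms(1,2,2)] bary_vertex[OF assms(1,2,3)] assms(4) by auto

lemma G_nz: assumes nd: "nondeg_triangle V" and ij: "i \<in> {0,1,2}" "j \<in> {0,1,2}" "i \<noteq> j"
  and m: "m = 3 - i - j" and n: "norm n = 1" "inner n (V j - V i) = 0"
  shows "G V m n \<noteq> 0"
proof -
  have mi: "m < 3" "i < 3" "j < 3" using ijm_cases[OF ij] m by auto
  have c: "((m+1) mod 3 = i \<and> (m+2) mod 3 = j) \<or> ((m+1) mod 3 = j \<and> (m+2) mod 3 = i)"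
    using ijm_cases[OF ij] m by auto
  have d1: "V j - V i \<noteq> 0" using V_distinct[OF nd mi(3) mi(2)] ij(3) by auto
  have d2: "V i - V j \<noteq> 0" using d1 by (metis eq_iff_diff_eq_0)
  have o2: "inner n (V i - V j) = 0" using n(2) by (simp add: inner_diff_right)
  have dn: "den V m \<noteq> 0" using den_nz[OF nd mi(1)] .
  show ?thesis using c det2_orth[OF n(2) n(1) d1] det2_orth[OF o2 n(1) d2] dn
    unfolding G_def by auto
qed


lemma tri:
  assumes nd: "nondeg_triangle V" and ij: "i \<in> {0,1,2}" "j \<in> {0,1,2}" "i \<noteq> j"
    and m: "m = 3 - i - j" and r: "r1 \<le> r0"
    and n: "norm n = 1" "inner n (V j - V i) = 0"
    and zero: "\<And>\<beta> a b. (\<beta>,a,b) \<in> BB k r0 r1 \<Longrightarrow>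
        edge_moment V i j n \<beta> a b (\<lambda>x. \<Sum>\<alpha>\<in>SS k i j r0 r1. cf \<alpha> * bary_mono V \<alpha> x) = 0"
  shows "\<forall>\<alpha>\<in>SS k i j r0 r1. cf \<alpha> = 0"
proof -
  define S where "S = SS k i j r0 r1"
  have fS: "finite S" using bij_BB_SS[OF ij m r] S_def by auto
  have SC: "\<alpha> \<in> S \<longleftrightarrow> (\<forall>l>2. \<alpha> l = 0) \<and> \<alpha> i + \<alpha> j + \<alpha> m = k \<and> \<alpha> m \<le> r1 \<and> r0 < \<alpha> j + \<alpha> m \<and> r0 < \<alpha> i + \<alpha> m" for \<alpha>
    unfolding S_def SS_def using S_char[OF ij m] by simp
  have mi: "m \<noteq> i" "m \<noteq> j" "m < 3" "i < 3" "j < 3" using ijm_cases[OF ij] m by auto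
  have out: "l \<notin> {i,j,m} \<Longrightarrow> 2 < l" for l using ijm_cases[OF ij] m by auto
  define g where "g = G V m n"
  have gnz: "g \<noteq> 0" unfolding g_def by (rule G_nz[OF nd ij m n])
  have dnz: "dist (V i) (V j) \<noteq> 0" using V_distinct[OF nd mi(4) mi(5) ij(3)] by simp
  have bi: "bary V i (V i + s *\<^sub>R (V j - V i)) = 1 - s" for s
    using mi ij(3) by (simp add: bary_edge[OF nd] bary_vertex[OF nd])
  have bj: "bary V j (V i + s *\<^sub>R (V j - V i)) = s" for s
    using mi ij(3) by (simp add: bary_edge[OF nd] bary_vertex[OF nd])
  have main: "\<forall>\<alpha>\<in>S. \<alpha> m = \<beta> \<longrightarrow> cf \<alpha> = 0" for \<beta>
  proof (induction \<beta> rule: less_induct)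
    case (less \<beta>)
    show ?case
    proof (cases "\<beta> \<le> r1")
      case False then show ?thesis using SC by auto
    next
      case True
      define Sb where "Sb = {\<alpha>\<in>S. \<alpha> m = \<beta>}"
      define q where "q = r0 + 1 - \<beta>"
      have fSb: "finite Sb" using fS Sb_def by simp
      have IH: "\<alpha> \<in> S \<Longrightarrow> \<alpha> m < \<beta> \<Longrightarrow> cf \<alpha> = 0" for \<alpha> using less by auto
      define p where "p s = (\<Sum>\<alpha>\<in>Sb. cf \<alpha> * (1-s)^(\<alpha> i) * s^(\<alpha> j))" for s :: real
      have pt: "(\<Sum>\<alpha>\<in>S. cf \<alpha> * coeff (PP V \<alpha> (V i + s *\<^sub>R (V j - V i)) n) \<beta>) = g^\<beta> * p s" for s
      proof -
        have "(\<Sum>\<alpha>\<in>S. cf \<alpha> * coeff (PP V \<alpha> (V i + s *\<^sub>R (V j - V i)) n) \<beta>) =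
              (\<Sum>\<alpha>\<in>S. if \<alpha> m = \<beta> then g^\<beta> * (cf \<alpha> * (1-s)^(\<alpha> i) * s^(\<alpha> j)) else 0)"
        proof (rule sum.cong[OF refl])
          fix \<alpha> assume a: "\<alpha> \<in> S"
          have e: "coeff (PP V \<alpha> (V i + s *\<^sub>R (V j - V i)) n) \<beta> =
              (if \<beta> < \<alpha> m then 0 else if \<beta> = \<alpha> m then G V m n ^ \<beta> * (1 - s) ^ \<alpha> i * s ^ \<alpha> j
               else coeff (PP V \<alpha> (V i + s *\<^sub>R (V j - V i)) n) \<beta>)"
            by (rule coeff_PP_edge[OF nd mi(4,5,3) ij(3)]) (use mi in auto)
          show "cf \<alpha> * coeff (PP V \<alpha> (V i + s *\<^sub>R (V j - V i)) n) \<beta> =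
              (if \<alpha> m = \<beta> then g^\<beta> * (cf \<alpha> * (1-s)^(\<alpha> i) * s^(\<alpha> j)) else 0)"
          proof (cases "\<alpha> m < \<beta>")
            case True then show ?thesis using IH[OF a] by simp
          next
            case False then show ?thesis using e unfolding g_def by (auto simp: mult_ac)
          qed
        qed
        also have "\<dots> = g^\<beta> * p s"
          unfolding p_def Sb_def sum.inter_filter[OF fS, symmetric] sum_distrib_left ..
        finally show ?thesis .
      qed
      have I0: "integral {0..1} (\<lambda>s. p s * (1-s)^a * s^b) = 0" if ab: "a + b + 2*(r0+1) = k + \<beta>" for a b
      proof -
        have "(\<lambda>s. fact \<beta> * (\<Sum>\<alpha>\<in>S. cf \<alpha> * coeff (PP V \<alpha> (V i + s *\<^sub>R (V j - V i)) n) \<beta>) *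
            bary V i (V i + s *\<^sub>R (V j - V i)) ^ a * bary V j (V i + s *\<^sub>R (V j - V i)) ^ b)
            = (\<lambda>s. (fact \<beta> * g^\<beta>) * (p s * (1-s)^a * s^b))"
          by (rule ext) (simp only: pt bi bj mult_ac)
        then have "edge_moment V i j n \<beta> a b (\<lambda>x. \<Sum>\<alpha>\<in>S. cf \<alpha> * bary_mono V \<alpha> x)
           = dist (V i) (V j) * ((fact \<beta> * g^\<beta>) * integral {0..1} (\<lambda>s. p s * (1-s)^a * s^b))"
          unfolding edge_moment_sum by simp
        moreover have "(\<beta>,a,b) \<in> BB k r0 r1" unfolding BB_def using True ab by simp
        ultimately have "dist (V i) (V j) * ((fact \<beta> * g^\<beta>) * integral {0..1} (\<lambda>s. p s * (1-s)^a * s^b)) = 0"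
          using zero S_def by simp
        then show ?thesis using dnz gnz by simp
      qed
      have ge: "q \<le> \<alpha> i \<and> q \<le> \<alpha> j \<and> (\<alpha> i - q) + (\<alpha> j - q) + 2*(r0+1) = k + \<beta> \<and> \<alpha> m = \<beta>"
        if "\<alpha> \<in> Sb" for \<alpha>
        using that unfolding Sb_def q_def SC using True r by auto
      define h where "h s = (\<Sum>\<alpha>\<in>Sb. cf \<alpha> * (1-s)^(\<alpha> i - q) * s^(\<alpha> j - q))" for s :: real
      have ph: "p s = ((1 - s) * s)^q * h s" for s
        unfolding p_def h_def sum_distrib_left
      proof (rule sum.cong[OF refl])
        fix \<alpha> assume a: "\<alpha> \<in> Sb"
        have "(1-s)^(\<alpha> i) = (1-s)^q * (1-s)^(\<alpha> i - q)" using ge[OF a]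
          by (simp flip: power_add)
        moreover have "s^(\<alpha> j) = s^q * s^(\<alpha> j - q)" using ge[OF a]
          by (simp flip: power_add)
        ultimately show "cf \<alpha> * (1 - s) ^ \<alpha> i * s ^ \<alpha> j =
            ((1 - s) * s) ^ q * (cf \<alpha> * (1 - s) ^ (\<alpha> i - q) * s ^ (\<alpha> j - q))"
          by (simp add: power_mult_distrib mult_ac)
      qed
      have cp: "continuous_on {0..1} p" unfolding p_def by (intro continuous_intros)
      have ch: "continuous_on {0..1} h" unfolding h_def by (intro continuous_intros)
      have "integral {0..1} (\<lambda>s. ((1 - s) * s)^q * (h s)^2) =
            integral {0..1} (\<lambda>s. \<Sum>\<alpha>\<in>Sb. cf \<alpha> * (p s * (1-s)^(\<alpha> i - q) * s^(\<alpha> j - q)))"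
      proof (rule arg_cong[where f="integral _"], rule ext)
        fix s :: real
        have "((1 - s) * s)^q * (h s)^2 = p s * h s" by (simp add: ph power2_eq_square)
        also have "\<dots> = (\<Sum>\<alpha>\<in>Sb. cf \<alpha> * (p s * (1-s)^(\<alpha> i - q) * s^(\<alpha> j - q)))"
          unfolding h_def sum_distrib_left by (simp add: mult_ac)
        finally show "((1 - s) * s)^q * (h s)^2 = (\<Sum>\<alpha>\<in>Sb. cf \<alpha> * (p s * (1-s)^(\<alpha> i - q) * s^(\<alpha> j - q)))" .
      qed
      also have "\<dots> = (\<Sum>\<alpha>\<in>Sb. integral {0..1} (\<lambda>s. cf \<alpha> * (p s * (1-s)^(\<alpha> i - q) * s^(\<alpha> j - q))))"
        by (rule integral_sum[OF fSb], rule integrable_continuous_interval)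
           (use cp in \<open>intro continuous_intros\<close>)
      also have "\<dots> = 0"
      proof (rule sum.neutral, rule ballI)
        fix \<alpha> assume a: "\<alpha> \<in> Sb"
        show "integral {0..1} (\<lambda>s. cf \<alpha> * (p s * (1-s)^(\<alpha> i - q) * s^(\<alpha> j - q))) = 0"
        proof -
          have c: "(\<alpha> i - q) + (\<alpha> j - q) + 2*(r0+1) = k + \<beta>" using ge[OF a] by linarith
          have "integral {0..1} (\<lambda>s. p s * (1-s)^(\<alpha> i - q) * s^(\<alpha> j - q)) = 0" by (rule I0[OF c])
          then show ?thesis by (simp add: mult.assoc)
        qed
      qed
      finally have int0: "integral {0..1} (\<lambda>s. ((1 - s) * s)^q * (h s)^2) = 0" .
      have hz: "h s = 0" if s: "0 < s" "s < 1" for s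
      proof -
        have "((1 - s) * s)^q * (h s)^2 = 0"
          by (rule integral_zero_imp[OF _ _ int0])
             (use ch s in \<open>auto intro!: continuous_intros\<close>)
        moreover have "((1 - s) * s)^q \<noteq> 0" using s by simp
        ultimately show ?thesis by (metis mult_eq_0_iff power_eq_0_iff zero_neq_numeral)
      qed
      have injp: "inj_on (\<lambda>\<alpha>. \<alpha> j - q) Sb"
      proof (rule inj_onI)
        fix \<alpha>1 \<alpha>2 assume a1: "\<alpha>1 \<in> Sb" and a2: "\<alpha>2 \<in> Sb" and e: "\<alpha>1 j - q = \<alpha>2 j - q"
        have s1: "\<alpha>1 \<in> S" "\<alpha>2 \<in> S" using a1 a2 Sb_def by auto
        show "\<alpha>1 = \<alpha>2"
        proof
          fix l
          have ej: "\<alpha>1 j = \<alpha>2 j" using ge[OF a1] ge[OF a2] e by linarith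
          have em: "\<alpha>1 m = \<alpha>2 m" using ge[OF a1] ge[OF a2] by simp
          have ei: "\<alpha>1 i = \<alpha>2 i" using SC[of \<alpha>1] SC[of \<alpha>2] s1 ej em by linarith
          show "\<alpha>1 l = \<alpha>2 l"
          proof (cases "l \<in> {i,j,m}")
            case True then show ?thesis using ei ej em by auto
          next
            case False then show ?thesis using out[OF False] SC[of \<alpha>1] SC[of \<alpha>2] s1 by auto
          qed
        qed
      qed
      define dd where "dd = k + \<beta> - 2*(r0+1)"
      have led: "\<alpha> j - q \<le> dd" if "\<alpha> \<in> Sb" for \<alpha> using ge[OF that] unfolding dd_def by linarith
      have eqn: "(\<Sum>\<alpha>\<in>Sb. cf \<alpha> * (1-s)^(dd - (\<alpha> j - q)) * s^(\<alpha> j - q)) = 0"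
        if s: "0 < s" "s < 1" for s :: real
      proof -
        have "(\<Sum>\<alpha>\<in>Sb. cf \<alpha> * (1-s)^(dd - (\<alpha> j - q)) * s^(\<alpha> j - q)) = h s"
          unfolding h_def
        proof (rule sum.cong[OF refl])
          fix \<alpha> assume "\<alpha> \<in> Sb"
          then have "dd - (\<alpha> j - q) = \<alpha> i - q" using ge unfolding dd_def by fastforce
          then show "cf \<alpha> * (1-s)^(dd - (\<alpha> j - q)) * s^(\<alpha> j - q) =
                     cf \<alpha> * (1-s)^(\<alpha> i - q) * s^(\<alpha> j - q)" by simp
        qed
        then show ?thesis using hz[OF s] by simp
      qed
      have "cf \<alpha> = 0" if a: "\<alpha> \<in> Sb" for \<alpha>
        using bern2[of Sb "\<lambda>\<alpha>. \<alpha> j - q" dd cf \<alpha>] fSb injp led eqn a by blast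
      then show ?thesis unfolding Sb_def by auto
    qed
  qed
  then show ?thesis unfolding S_def[symmetric] by auto
qed


theorem mainTheorem10:
  fixes V :: "nat \<Rightarrow> real \<times> real" and r0 r1 k i j :: nat and n :: "real \<times> real"
  assumes "r1 \<le> r0" and "2 * r0 + 1 \<le> k"
    and "nondeg_triangle V"
    and "i \<in> {0,1,2}" and "j \<in> {0,1,2}" and "i \<noteq> j"
    and "norm n = 1" and "inner n (V j - V i) = 0"
  shows "bij_betw
           (\<lambda>u. restrict (\<lambda>(\<beta>, a, b). edge_moment V i j n \<beta> a b u)
                 {(\<beta>, a, b). \<beta> \<le> r1 \<and> a + b + 2 * (r0 + 1) = k + \<beta>})
           (Pk V (D k {i, j} r1 - (D k {i} r0 \<union> D k {j} r0)))
           ({(\<beta>, a, b). \<beta> \<le> r1 \<and> a + b + 2 * (r0 + 1) = k + \<beta>} \<rightarrow>\<^sub>E (UNIV :: real set))"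
proof -
  note r = assms(1) and nd = assms(3) and ij = assms(4,5,6) and nn = assms(7,8)
  define m where "m = 3 - i - j"
  define B where "B = BB k r0 r1"
  define S where "S = SS k i j r0 r1"
  have Beq: "{(\<beta>, a, b). \<beta> \<le> r1 \<and> a + b + 2 * (r0 + 1) = k + \<beta>} = B" by (simp add: B_def BB_def)
  have Seq: "D k {i, j} r1 - (D k {i} r0 \<union> D k {j} r0) = S" by (simp add: S_def SS_def)
  have fS: "finite S" and cS: "card S = card B"
    using bij_BB_SS[OF ij m_def r] S_def B_def by auto
  have fB: "finite B" using finite_BB B_def by simp
  let ?em = "\<lambda>x u. (case x of (\<beta>, a, b) \<Rightarrow> edge_moment V i j n \<beta> a b u)"
  have lin: "?em x (\<lambda>y. \<Sum>\<alpha>\<in>S. cf \<alpha> * bary_mono V \<alpha> y) = (\<Sum>\<alpha>\<in>S. cf \<alpha> * ?em x (bary_mono V \<alpha>))"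
    for x cf by (cases x) (simp add: edge_moment_lin[OF fS])
  have tri': "\<forall>\<alpha>\<in>S. cf \<alpha> = 0" if z: "\<And>x. x \<in> B \<Longrightarrow> ?em x (\<lambda>y. \<Sum>\<alpha>\<in>S. cf \<alpha> * bary_mono V \<alpha> y) = 0" for cf
    unfolding S_def
    by (rule tri[OF nd ij m_def r nn]) (use z in \<open>auto simp: B_def S_def\<close>)
  let ?M = "\<lambda>u. restrict (\<lambda>x. ?em x u) B"
  have "bij_betw ?M (Pk V S) (B \<rightarrow>\<^sub>E (UNIV :: real set))"
    unfolding bij_betw_def
  proof
    show "inj_on ?M (Pk V S)"
    proof (rule inj_onI)
      fix u1 u2 assume u1: "u1 \<in> Pk V S" and u2: "u2 \<in> Pk V S" and e: "?M u1 = ?M u2"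
      obtain c1 where c1: "u1 = (\<lambda>x. \<Sum>\<alpha>\<in>S. c1 \<alpha> * bary_mono V \<alpha> x)" using u1 Pk_def by auto
      obtain c2 where c2: "u2 = (\<lambda>x. \<Sum>\<alpha>\<in>S. c2 \<alpha> * bary_mono V \<alpha> x)" using u2 Pk_def by auto
      have "\<forall>\<alpha>\<in>S. c1 \<alpha> - c2 \<alpha> = 0"
      proof (rule tri')
        fix x assume x: "x \<in> B"
        have "?em x u1 = ?em x u2" using fun_cong[OF e, of x] x by simp
        then show "?em x (\<lambda>y. \<Sum>\<alpha>\<in>S. (c1 \<alpha> - c2 \<alpha>) * bary_mono V \<alpha> y) = 0"
          unfolding lin c1 c2 by (simp add: left_diff_distrib sum_subtractf)
      qed
      then show "u1 = u2" unfolding c1 c2 by (auto intro!: sum.cong)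
    qed
    show "?M ` Pk V S = B \<rightarrow>\<^sub>E UNIV"
    proof
      show "?M ` Pk V S \<subseteq> B \<rightarrow>\<^sub>E UNIV" by auto
      show "B \<rightarrow>\<^sub>E UNIV \<subseteq> ?M ` Pk V S"
      proof
        fix w :: "nat \<times> nat \<times> nat \<Rightarrow> real" assume w: "w \<in> B \<rightarrow>\<^sub>E UNIV"
        let ?v = "\<lambda>\<alpha> x. if x \<in> B then ?em x (bary_mono V \<alpha>) else 0"
        let ?w = "\<lambda>x. if x \<in> B then w x else 0"
        have "\<exists>c. \<forall>x\<in>B. (\<Sum>\<alpha>\<in>S. c \<alpha> * ?v \<alpha> x) = ?w x"
        proof (rule lin_alg[OF fS fB cS])
          fix c assume h: "\<And>x. x \<in> B \<Longrightarrow> (\<Sum>\<alpha>\<in>S. c \<alpha> * ?v \<alpha> x) = 0"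
          show "\<forall>\<alpha>\<in>S. c \<alpha> = 0"
          proof (rule tri')
            fix x assume "x \<in> B"
            then show "?em x (\<lambda>y. \<Sum>\<alpha>\<in>S. c \<alpha> * bary_mono V \<alpha> y) = 0"
              using h[of x] unfolding lin by simp
          qed
        qed auto
        then obtain c where c: "\<forall>x\<in>B. (\<Sum>\<alpha>\<in>S. c \<alpha> * ?v \<alpha> x) = ?w x" by blast
        let ?u = "\<lambda>y. \<Sum>\<alpha>\<in>S. c \<alpha> * bary_mono V \<alpha> y"
        have uP: "?u \<in> Pk V S" unfolding Pk_def by auto
        have "?M ?u = w"
        proof
          fix x show "?M ?u x = w x"
          proof (cases "x \<in> B")
            case True
            have "(\<Sum>\<alpha>\<in>S. c \<alpha> * ?v \<alpha> x) = ?w x" using c True by blast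
            then have "(\<Sum>\<alpha>\<in>S. c \<alpha> * ?em x (bary_mono V \<alpha>)) = w x" using True by (simp only: if_True)
            moreover have "?M ?u x = ?em x ?u" using True by (simp only: restrict_apply')
            ultimately show ?thesis by (simp only: lin)
          next
            case False then show ?thesis using PiE_arb[OF w False] by (simp only: restrict_apply if_False)
          qed
        qed
        note eqM = this
        show "w \<in> ?M ` Pk V S"
        proof (rule image_eqI[where x="?u"])
          show "w = ?M ?u" using eqM[symmetric] .
          show "?u \<in> Pk V S" by (rule uP)
        qed
      qed
    qed
  qed
  then show ?thesis unfolding Beq Seq .
qed

end
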